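(* Let $c\in[0,1]$. There exists a countable collection of languages $\mathcal{L}$ such that no set-based generator can generate in the limit from $\mathcal{L}$ and achieve set-based upper density at least $1-c+\varepsilon$, for any $\varepsilon>0$, under adversaries that use an enumeration without noise and with $c$-omissions.
   Context: The universe is $U=\mathbb{N}$ with its natural order. A language is an infinite subset of $U$; a collection is a countable family of languages. For $A,B\subseteq\mathbb{N}$ with $B=\{b_1<b_2<\cdots\}$, $\mu_{\rm up}(A,B)=\limsup_n\frac1n|A\cap\{b_1,\dots,b_n\}|$ and $\mu_{\rm low}(A,B)=\liminf_n\frac1n|A\cap\{b_1,\dots,b_n\}|$. An enumeration of a set $L$ (without noise or omissions) is a sequence in which every element of $L$ appears exactly once and no other elements appear; $S_n=\{x_1,\dots,x_n\}$. An enumeration of $K$ without noise and with $c$-omissions is an enumeration of some $\hat K\subseteq K$ with $\mu_{\rm low}(\hat K,K)\ge1-c$. A set-based generator is a sequence of maps that, given $x_1,\dots,x_n$ (and knowledge of $\mathcal{L}$, not of $K$), outputs $A_n\subseteq U\setminus S_n$. It generates in the limit if for every $K\in\mathcal{L}$ and admissible enumeration of $K$ there is $n^\star$ with $A_n\subseteq K$ for $n\ge n^\star$; it achieves set-based upper density $\rho$ if $\limsup_n\mu_{\rm low}(A_n,K)\ge\rho$ for every such $K$ and enumeration. *)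

theory Defs
  imports "HOL-Analysis.Analysis" "HOL-Library.Countable_Set" "HOL-Library.Infinite_Set"
begin

text \<open>Lower density of A relative to an infinite set B = {b_1 < b_2 < ...}:
  liminf over n >= 1 of |A \<inter> {b_1,...,b_n}| / n.  Here enumerate B k is b_(k+1).\<close>
definition mu_low :: "nat set \<Rightarrow> nat set \<Rightarrow> ereal" where
  "mu_low A B = liminf (\<lambda>n. ereal (real (card (A \<inter> enumerate B ` {..<Suc n})) / real (Suc n)))"

definition mu_up :: "nat set \<Rightarrow> nat set \<Rightarrow> ereal" where
  "mu_up A B = limsup (\<lambda>n. ereal (real (card (A \<inter> enumerate B ` {..<Suc n})) / real (Suc n)))"

definition is_collection :: "nat set set \<Rightarrow> bool" where
  "is_collection \<L> \<longleftrightarrow> countable \<L> \<and> (\<forall>L\<in>\<L>. infinite L)"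

definition is_enumeration :: "(nat \<Rightarrow> nat) \<Rightarrow> nat set \<Rightarrow> bool" where
  "is_enumeration x L \<longleftrightarrow> inj x \<and> range x = L"

definition is_omission_enum :: "real \<Rightarrow> (nat \<Rightarrow> nat) \<Rightarrow> nat set \<Rightarrow> bool" where
  "is_omission_enum c x K \<longleftrightarrow>
     (\<exists>Khat. Khat \<subseteq> K \<and> mu_low Khat K \<ge> ereal (1 - c) \<and> is_enumeration x Khat)"

text \<open>A set-based generator: the map G applied to the list [x_1,...,x_n] gives A_n
  (the list length encodes n, so this is a sequence of maps).\<close>
definition is_set_generator :: "(nat list \<Rightarrow> nat set) \<Rightarrow> bool" where
  "is_set_generator G \<longleftrightarrow> (\<forall>xs. G xs \<inter> set xs = {})"

abbreviation gen_out :: "(nat list \<Rightarrow> nat set) \<Rightarrow> (nat \<Rightarrow> nat) \<Rightarrow> nat \<Rightarrow> nat set" where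
  "gen_out G x n \<equiv> G (map x [0..<n])"

definition generates_in_limit_omit ::
  "real \<Rightarrow> nat set set \<Rightarrow> (nat list \<Rightarrow> nat set) \<Rightarrow> bool" where
  "generates_in_limit_omit c \<L> G \<longleftrightarrow>
     (\<forall>K\<in>\<L>. \<forall>x. is_omission_enum c x K \<longrightarrow>
        (\<exists>nstar. \<forall>n\<ge>nstar. gen_out G x n \<subseteq> K))"

definition achieves_set_upper_density_omit ::
  "real \<Rightarrow> nat set set \<Rightarrow> (nat list \<Rightarrow> nat set) \<Rightarrow> real \<Rightarrow> bool" where
  "achieves_set_upper_density_omit c \<L> G \<rho> \<longleftrightarrow>
     (\<forall>K\<in>\<L>. \<forall>x. is_omission_enum c x K \<longrightarrow>
        limsup (\<lambda>n. mu_low (gen_out G x n) K) \<ge> ereal \<rho>)"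

end

theory Submission
  imports Defs
begin

lemma enum_UNIV: "enumerate (UNIV::nat set) n = n"
proof (induction n rule: less_induct)
  case (less n)
  obtain k where k: "enumerate (UNIV::nat set) k = n"
    using enumerate_Ex[of "UNIV::nat set" n] by auto
  have "k \<le> n" using le_enumerate[of "UNIV::nat set" k] k by simp
  moreover have "k \<noteq> n \<Longrightarrow> False" using less[of k] k \<open>k \<le> n\<close> by simp
  ultimately have "k = n" by blast
  then show ?case using k by simp
qed

lemma card_mod:
  assumes "0 < q" "p \<le> q"
  shows "card ({n::nat. n mod q < p} \<inter> {..<N}) = p * (N div q) + min (N mod q) p"
proof (induction N)
  case 0 then show ?case by simp
next
  case (Suc N)
  have c: "card ({n::nat. n mod q < p} \<inter> {..<Suc N}) = card ({n::nat. n mod q < p} \<inter> {..<N}) + (if N mod q < p then 1 else 0)"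
  proof (cases "N mod q < p")
    case True
    then have "{n::nat. n mod q < p} \<inter> {..<Suc N} = insert N ({n::nat. n mod q < p} \<inter> {..<N})" by auto
    then show ?thesis using True by simp
  next
    case False
    then have "{n::nat. n mod q < p} \<inter> {..<Suc N} = ({n::nat. n mod q < p} \<inter> {..<N})" by (auto simp: less_Suc_eq)
    then show ?thesis using False by simp
  qed
  show ?case
  proof (cases "Suc N mod q = 0")
    case True
    have ms: "Suc (N mod q) = q" using True by (simp add: mod_Suc split: if_splits)
    have d: "Suc N div q = Suc (N div q)" using True by (simp add: div_Suc)
    have key: "min (N mod q) p + (if N mod q < p then 1 else 0) = p"
    proof (cases "p = q")
      case True then show ?thesis using ms by auto
    next
      case False then have "p < q" using assms(2) by simp
      then show ?thesis using ms by auto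
    qed
    have "card ({n::nat. n mod q < p} \<inter> {..<Suc N}) = p * (N div q) + (min (N mod q) p + (if N mod q < p then 1 else 0))"
      using c Suc.IH by simp
    also have "\<dots> = p * (N div q) + p" by (simp only: key)
    also have "\<dots> = p * (Suc N div q) + min (Suc N mod q) p" using d True by simp
    finally show ?thesis .
  next
    case False
    have m: "Suc N mod q = Suc (N mod q)" using False by (simp add: mod_Suc split: if_splits)
    have d: "Suc N div q = N div q" using False assms(1) by (simp add: div_Suc)
    show ?thesis using c Suc.IH m d by auto
  qed
qed

lemma img_UNIV: "enumerate (UNIV::nat set) ` A = A"
  by (simp add: enum_UNIV)

lemma mu_low_mono:
  assumes "A \<subseteq> B"
  shows "mu_low A K \<le> mu_low B K"
  unfolding mu_low_def
proof (rule Liminf_mono, rule always_eventually, rule allI)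
  fix n
  have "card (A \<inter> enumerate K ` {..<Suc n}) \<le> card (B \<inter> enumerate K ` {..<Suc n})"
    by (rule card_mono) (use assms in auto)
  then show "ereal (real (card (A \<inter> enumerate K ` {..<Suc n})) / real (Suc n))
      \<le> ereal (real (card (B \<inter> enumerate K ` {..<Suc n})) / real (Suc n))"
    by (simp add: divide_right_mono)
qed

lemma mu_low_self:
  assumes "infinite K"
  shows "mu_low K K = 1"
proof -
  have "\<And>n. ereal (real (card (K \<inter> enumerate K ` {..<Suc n})) / real (Suc n)) = 1"
  proof -
    fix n
    have "K \<inter> enumerate K ` {..<Suc n} = enumerate K ` {..<Suc n}"
      using enumerate_in_set[OF assms] by auto
    moreover have "card (enumerate K ` {..<Suc n}) = Suc n"
      using inj_enumerate[OF assms] by (simp add: card_image inj_on_subset)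
    ultimately show "ereal (real (card (K \<inter> enumerate K ` {..<Suc n})) / real (Suc n)) = 1"
      by simp
  qed
  then have "(\<lambda>n. ereal (real (card (K \<inter> enumerate K ` {..<Suc n})) / real (Suc n))) = (\<lambda>n. 1)"
    by (rule ext)
  then show ?thesis unfolding mu_low_def by (simp add: Liminf_const)
qed

lemma mod_ineq:
  fixes r p q :: nat
  assumes "r \<le> q" "p \<le> q"
  shows "r * p \<le> q * min r p"
proof (cases "r \<le> p")
  case True
  then show ?thesis using assms by (simp add: mult.commute mult_le_mono)
next
  case False
  then show ?thesis using assms by (simp add: mult_le_mono)
qed

lemma mu_low_mod:
  assumes "0 < q" "p \<le> q"
  shows "mu_low {n::nat. n mod q < p} UNIV = ereal (real p / real q)"
proof (rule antisym)
  let ?f = "\<lambda>n. ereal (real (card ({n::nat. n mod q < p} \<inter> {..<Suc n})) / real (Suc n))"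
  have f: "mu_low {n::nat. n mod q < p} UNIV = liminf ?f"
    unfolding mu_low_def img_UNIV ..
  define r where "r k = Suc k * q - 1" for k
  have sm: "strict_mono r" unfolding r_def strict_mono_def using assms(1)
    by (simp add: diff_less_mono)
  have rS: "Suc (r k) = Suc k * q" for k unfolding r_def using assms(1) by simp
  have "(?f \<circ> r) k = ereal (real p / real q)" for k
  proof -
    have cp: "card ({n::nat. n mod q < p} \<inter> {..<Suc (r k)}) = p * Suc k"
      unfolding rS card_mod[OF assms] using assms(1) by simp
    have c2: "real (Suc (r k)) = real (Suc k) * real q" unfolding rS by (simp only: of_nat_mult)
    have c1: "real (card ({n::nat. n mod q < p} \<inter> {..<Suc (r k)})) = real p * real (Suc k)"
      unfolding cp by (simp only: of_nat_mult)
    have "real (card ({n::nat. n mod q < p} \<inter> {..<Suc (r k)})) / real (Suc (r k))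
       = (real p * real (Suc k)) / (real (Suc k) * real q)" by (simp only: c1 c2)
    also have "\<dots> = real p / real q" by simp
    finally show ?thesis by simp
  qed
  then have "(?f \<circ> r) = (\<lambda>k. ereal (real p / real q))" by (rule ext)
  then have "liminf (?f \<circ> r) = ereal (real p / real q)" by (simp add: Liminf_const)
  then show "mu_low {n::nat. n mod q < p} UNIV \<le> ereal (real p / real q)"
    using liminf_subseq_mono[OF sm, of ?f] f by simp
  show "ereal (real p / real q) \<le> mu_low {n::nat. n mod q < p} UNIV"
    unfolding f
  proof (rule Liminf_bounded, rule always_eventually, rule allI)
    fix n
    let ?N = "Suc n"
    let ?C = "card ({n::nat. n mod q < p} \<inter> {..<?N})"
    have g1: "(a*q + b)*p = q*a*p + b*p" for a b :: nat by (simp add: algebra_simps)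
    have g2: "q*a*p + q*b = q*(p*a + b)" for a b :: nat by (simp add: algebra_simps)
    have "?N * p \<le> q * ?C"
    proof -
      have "?N * p = (?N div q * q + ?N mod q) * p"
        using div_mult_mod_eq[of ?N q] by (rule arg_cong[where f="\<lambda>t. t * p", OF sym])
      also have "\<dots> = q * (?N div q) * p + (?N mod q) * p" by (rule g1)
      also have "\<dots> \<le> q * (?N div q) * p + q * min (?N mod q) p"
        using mod_ineq[of "?N mod q" q p] assms by (simp add: less_imp_le)
      also have "\<dots> = q * (p * (?N div q) + min (?N mod q) p)" by (rule g2)
      also have "\<dots> = q * ?C" by (simp only: card_mod[OF assms])
      finally show ?thesis .
    qed
    then have "real ?N * real p \<le> real q * real ?C"
      by (simp only: of_nat_mult[symmetric] of_nat_le_iff)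
    then have "real p / real q \<le> real ?C / real ?N"
      using assms(1) by (simp add: divide_le_eq le_divide_eq mult.commute)
    then show "ereal (real p / real q) \<le> ?f n" by simp
  qed
qed


theorem theorem6p4:
  fixes c :: real
  assumes "0 \<le> c" and "c \<le> 1"
  shows "\<exists>\<L>. is_collection \<L> \<and>
           (\<forall>\<epsilon>>0. \<forall>G. is_set_generator G \<longrightarrow>
              \<not> (generates_in_limit_omit c \<L> G \<and>
                  achieves_set_upper_density_omit c \<L> G (1 - c + \<epsilon>)))"
proof -
  define P where "P q = max 1 (nat \<lceil>(1 - c) * real q\<rceil>)" for q :: nat
  define S where "S q = {n::nat. n mod q < P q}" for q :: nat
  define \<L> where "\<L> = insert UNIV (range (\<lambda>m. S (Suc m)))"
  have Ple: "P q \<le> q" if "0 < q" for q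
  proof -
    have "(1 - c) * real q \<le> real q" using assms by (simp add: mult_left_le_one_le)
    then have "\<lceil>(1 - c) * real q\<rceil> \<le> int q" by (simp add: ceiling_le_iff)
    then show ?thesis unfolding P_def using that assms by auto
  qed
  have Ppos: "0 < P q" for q unfolding P_def by simp
  have Pge: "1 - c \<le> real (P q) / real q" if "0 < q" for q
  proof -
    have a0: "0 \<le> (1 - c) * real q" using assms by simp
    have "(1 - c) * real q \<le> of_int \<lceil>(1 - c) * real q\<rceil>" by (rule le_of_int_ceiling)
    also have "\<dots> = real (nat \<lceil>(1 - c) * real q\<rceil>)" using a0 by simp
    also have "\<dots> \<le> real (P q)" unfolding P_def by simp
    finally have "(1 - c) * real q \<le> real (P q)" .
    then show ?thesis using that by (simp add: field_simps)
  qed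
  have Plt: "real (P q) / real q \<le> 1 - c + 1 / real q" if "0 < q" for q
  proof -
    have a0: "0 \<le> (1 - c) * real q" using assms by simp
    have "of_int \<lceil>(1 - c) * real q\<rceil> < (1 - c) * real q + 1" using ceiling_correct[of "(1 - c) * real q"] by linarith
    then have "real (nat \<lceil>(1 - c) * real q\<rceil>) < (1 - c) * real q + 1" using a0 by simp
    then have "real (P q) \<le> (1 - c) * real q + 1" unfolding P_def using a0 by (simp add: of_nat_max)
    then show ?thesis using that by (simp add: field_simps)
  qed
  have Sinf: "infinite (S q)" if "0 < q" for q
    unfolding infinite_nat_iff_unbounded_le
  proof
    fix m
    have "m * q \<in> S q" unfolding S_def using Ppos[of q] by simp
    moreover have "m \<le> m * q" using that by simp
    ultimately show "\<exists>n\<ge>m. n \<in> S q" by blast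
  qed
  have coll: "is_collection \<L>"
    unfolding is_collection_def \<L>_def using Sinf by auto
  have main: "\<not> (generates_in_limit_omit c \<L> G \<and> achieves_set_upper_density_omit c \<L> G (1 - c + \<epsilon>))"
    if epos: "\<epsilon> > 0" for \<epsilon> G
  proof
    assume H: "generates_in_limit_omit c \<L> G \<and> achieves_set_upper_density_omit c \<L> G (1 - c + \<epsilon>)"
    obtain m where m: "inverse (real (Suc m)) < \<epsilon>" using reals_Archimedean[OF epos] by blast
    define q where "q = Suc m"
    have q0: "0 < q" unfolding q_def by simp
    define K where "K = S q"
    have Kin: "K \<in> \<L>" unfolding K_def \<L>_def q_def by simp
    have Kinf: "infinite K" unfolding K_def using Sinf[OF q0] .
    define x where "x = enumerate K"
    have enum: "is_enumeration x K"
      unfolding is_enumeration_def x_def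
      using inj_enumerate[OF Kinf] bij_betw_imp_surj_on[OF bij_enumerate[OF Kinf]] by blast
    have om1: "is_omission_enum c x K"
      unfolding is_omission_enum_def
      using enum mu_low_self[OF Kinf] assms by (intro exI[of _ K]) auto
    have dK: "mu_low K UNIV = ereal (real (P q) / real q)"
      unfolding K_def S_def by (rule mu_low_mod[OF q0 Ple[OF q0]])
    have om2: "is_omission_enum c x UNIV"
      unfolding is_omission_enum_def
      using enum dK Pge[OF q0] by (intro exI[of _ K]) auto
    obtain nstar where ns: "\<forall>n\<ge>nstar. gen_out G x n \<subseteq> K"
      using H Kin om1 unfolding generates_in_limit_omit_def by blast
    have ach: "limsup (\<lambda>n. mu_low (gen_out G x n) UNIV) \<ge> ereal (1 - c + \<epsilon>)"
      using H om2 unfolding achieves_set_upper_density_omit_def \<L>_def by blast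
    have "eventually (\<lambda>n. mu_low (gen_out G x n) UNIV \<le> ereal (real (P q) / real q)) sequentially"
      unfolding eventually_sequentially
    proof (intro exI allI impI)
      fix n assume "nstar \<le> n"
      then have "gen_out G x n \<subseteq> K" using ns by blast
      then have "mu_low (gen_out G x n) UNIV \<le> mu_low K UNIV" by (rule mu_low_mono)
      then show "mu_low (gen_out G x n) UNIV \<le> ereal (real (P q) / real q)" using dK by simp
    qed
    then have lim: "limsup (\<lambda>n. mu_low (gen_out G x n) UNIV) \<le> ereal (real (P q) / real q)"
      by (rule Limsup_bounded)
    have "real (P q) / real q < 1 - c + \<epsilon>"
      using Plt[OF q0] m unfolding q_def by (simp add: inverse_eq_divide)
    then have "ereal (real (P q) / real q) < ereal (1 - c + \<epsilon>)" by simp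
    with lim have "limsup (\<lambda>n. mu_low (gen_out G x n) UNIV) < ereal (1 - c + \<epsilon>)"
      by (rule le_less_trans)
    with ach show False by simp
  qed
  show ?thesis using coll main by blast
qed

end
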